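(* Let $c$ be a statement and $s$ a state. If $((\mathit{Loc}\ c\ \mathit{PTop},\mathit{True}),s) \rightarrow^* (cf',s')$ in the small-step semantics, then there exist a syntactic configuration $cfa'$ and a state $sa'$ such that $\mathit{stmt\_to\_ta}\ c \vdash (\mathit{init\_s}(\mathit{stmt\_to\_ta}\ c), s) \rightarrow^* (cfa',sa')$ and $(cf',s') \approx (cfa',sa')$.
   Context: Syntax. Values: $\mathit{val} ::= \mathit{Bool}\ b \mid \mathit{Null}$. Expressions: $\mathit{expr} ::= \mathit{Val}\ v \mid \mathit{Var}\ x$. Statements: $\mathit{stmt} ::= \mathit{Empty} \mid \mathit{Assign}\ x\ v \mid \mathit{Seq}\ c_1\ c_2 \mid \mathit{Cond}\ e\ c_1\ c_2 \mid \mathit{While}\ e\ c$. Statement paths: $\mathit{stmt\_path} ::= \mathit{PTop} \mid \mathit{PSeqLeft}\ sp\ c_2 \mid \mathit{PSeqRight}\ c_1\ sp \mid \mathit{PCondLeft}\ e\ sp\ c_2 \mid \mathit{PCondRight}\ e\ c_1\ sp \mid \mathit{PWhile}\ e\ sp$. A location is $\mathit{Loc}\ c\ sp$; a syntactic configuration is a pair (location, Boolean). A state maps variable names to $\mathit{Some}\ v$ or $\mathit{None}$; $s(x\mapsto v)$ updates $x$ to $\mathit{Some}\ v$. $\mathit{eval}(\mathit{Val}\ v)\ s=v$; $\mathit{eval}(\mathit{Var}\ x)\ s=v$ if $s\,x=\mathit{Some}\ v$, else $\mathit{Null}$. Next location: $\mathit{next\_loc}\ c\ \mathit{PTop} = (\mathit{Loc}\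 c\ \mathit{PTop}, \mathit{False})$; $\mathit{next\_loc}\ c\ (\mathit{PSeqLeft}\ sp\ c_2) = (\mathit{Loc}\ c_2\ (\mathit{PSeqRight}\ c\ sp), \mathit{True})$; $\mathit{next\_loc}\ c\ (\mathit{PSeqRight}\ c_1\ sp) = (\mathit{Loc}\ (\mathit{Seq}\ c_1\ c)\ sp, \mathit{False})$; $\mathit{next\_loc}\ c\ (\mathit{PCondLeft}\ e\ sp\ c_2) = (\mathit{Loc}\ (\mathit{Cond}\ e\ c\ c_2)\ sp, \mathit{False})$; $\mathit{next\_loc}\ c\ (\mathit{PCondRight}\ e\ c_1\ sp) = (\mathit{Loc}\ (\mathit{Cond}\ e\ c_1\ c)\ sp, \mathit{False})$; $\mathit{next\_loc}\ c\ (\mathit{PWhile}\ e\ sp) = (\mathit{Loc}\ (\mathit{While}\ e\ c)\ sp, \mathit{True})$. Small-step semantics $\rightarrow$ on pairs (syntactic configuration, state), least relation with: $((\mathit{Loc}\ \mathit{Empty}\ sp,\mathit{True}),s)\rightarrow((\mathit{Loc}\ \mathit{Empty}\ sp,\mathit{False}),s)$; $((\mathit{Loc}\ (\mathit{Assign}\ x\ v)\ sp,\mathit{True}),s)\rightarrow((\mathit{Loc}\ (\mathit{Assign}\ x\ v)\ sp,\mathit{False}),s(x\mapsto v))$; $((\mathit{Loc}\ (\mathit{Seq}\ c_1\ c_2)\ sp,\mathit{True}),s)\rightarrow((\mathit{Loc}\ c_1\ (\mathit{PSeqLeft}\ sp\ c_2),\mathit{True}),s)$; if $\mathit{eval}\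 e\ s=\mathit{Bool}\ \mathit{True}$: $((\mathit{Loc}\ (\mathit{Cond}\ e\ c_1\ c_2)\ sp,\mathit{True}),s)\rightarrow((\mathit{Loc}\ c_1\ (\mathit{PCondLeft}\ e\ sp\ c_2),\mathit{True}),s)$; if $\mathit{eval}\ e\ s=\mathit{Bool}\ \mathit{False}$: $((\mathit{Loc}\ (\mathit{Cond}\ e\ c_1\ c_2)\ sp,\mathit{True}),s)\rightarrow((\mathit{Loc}\ c_2\ (\mathit{PCondRight}\ e\ c_1\ sp),\mathit{True}),s)$; if $\mathit{eval}\ e\ s=\mathit{Bool}\ \mathit{True}$: $((\mathit{Loc}\ (\mathit{While}\ e\ c)\ sp,\mathit{True}),s)\rightarrow((\mathit{Loc}\ c\ (\mathit{PWhile}\ e\ sp),\mathit{True}),s)$; if $\mathit{eval}\ e\ s=\mathit{Bool}\ \mathit{False}$: $((\mathit{Loc}\ (\mathit{While}\ e\ c)\ sp,\mathit{True}),s)\rightarrow((\mathit{Loc}\ (\mathit{While}\ e\ c)\ sp,\mathit{False}),s)$; if $sp\neq\mathit{PTop}$: $((\mathit{Loc}\ c\ sp,\mathit{False}),s)\rightarrow(\mathit{next\_loc}\ c\ sp,s)$. $\rightarrow^*$ is its reflexive-transitive closure. Automata: actions $\mathit{NoAct}$, $\mathit{AssAct}\ x\ v$ with $\mathit{action\_effect}\ \mathit{NoAct}\ s=s$, $\mathit{action\_effect}(\mathit{AssAct}\ x\ v)\ s=s(x\mapsto v)$; an edge is a record $(\mathit{source},\mathit{action},\mathit{dest})$; an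 automaton has a node list $\mathit{nodes}$, edge list $\mathit{edges}$, initial node $\mathit{init\_s}$. $\mathit{aut}\vdash(l,s)\rightarrow(l',s')$ iff some $e\in\mathit{edges}(\mathit{aut})$ has $\mathit{source}\ e=l$, $\mathit{dest}\ e=l'$, $s'=\mathit{action\_effect}(\mathit{action}\ e)\ s$; $\rightarrow^*$ is the reflexive-transitive closure. $\mathit{all\_locations}\ c\ sp$: contains $\mathit{Loc}\ c\ sp$, plus for $c=\mathit{Seq}\ c_1\ c_2$ the elements of $\mathit{all\_locations}\ c_1\ (\mathit{PSeqLeft}\ sp\ c_2)$ and $\mathit{all\_locations}\ c_2\ (\mathit{PSeqRight}\ c_1\ sp)$; for $c=\mathit{Cond}\ e\ c_1\ c_2$ those of $\mathit{all\_locations}\ c_1\ (\mathit{PCondLeft}\ e\ sp\ c_2)$ and $\mathit{all\_locations}\ c_2\ (\mathit{PCondRight}\ e\ c_1\ sp)$; for $c=\mathit{While}\ e\ c'$ those of $\mathit{all\_locations}\ c'\ (\mathit{PWhile}\ e\ sp)$; nothing else. $\mathit{nodes\_of\_stmt\_locations}$ pairs each location with both $\mathit{True}$ and $\mathit{False}$. $\mathit{synt\_step\_image}$: $(\mathit{Loc}\ \mathit{Empty}\ sp,\mathit{True})\mapsto[(\mathit{Loc}\ \mathit{Empty}\ sp,\mathit{False})]$; $(\mathit{Loc}\ (\mathit{Assign}\ x\ v)\ sp,\mathit{True})\mapsto[(\mathit{Loc}\ (\mathit{Assign}\ x\ v)\ sp,\mathit{False})]$; $(\mathit{Loc}\ (\mathit{Seq}\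 c_1\ c_2)\ sp,\mathit{True})\mapsto[(\mathit{Loc}\ c_1\ (\mathit{PSeqLeft}\ sp\ c_2),\mathit{True})]$; $(\mathit{Loc}\ (\mathit{Cond}\ e\ c_1\ c_2)\ sp,\mathit{True})\mapsto[(\mathit{Loc}\ c_1\ (\mathit{PCondLeft}\ e\ sp\ c_2),\mathit{True}),(\mathit{Loc}\ c_2\ (\mathit{PCondRight}\ e\ c_1\ sp),\mathit{True})]$; $(\mathit{Loc}\ (\mathit{While}\ e\ c)\ sp,\mathit{True})\mapsto[(\mathit{Loc}\ c\ (\mathit{PWhile}\ e\ sp),\mathit{True}),(\mathit{Loc}\ (\mathit{While}\ e\ c)\ sp,\mathit{False})]$; $(\mathit{Loc}\ c\ sp,\mathit{False})\mapsto[\,]$ if $sp=\mathit{PTop}$, else $[\mathit{next\_loc}\ c\ sp]$. $\mathit{action\_of\_synt\_config}(\mathit{Loc}\ (\mathit{Assign}\ x\ v)\ sp,\mathit{True})=\mathit{AssAct}\ x\ v$, $\mathit{NoAct}$ otherwise. $\mathit{stmt\_to\_ta}\ c$ is the automaton with $\mathit{nodes}=nds:=\mathit{nodes\_of\_stmt\_locations}(\mathit{all\_locations}\ c\ \mathit{PTop})$, edges the list of all $(\mathit{source}=n,\mathit{action}=\mathit{action\_of\_synt\_config}\ n,\mathit{dest}=t)$ with $n\in nds$ and $t\in\mathit{synt\_step\_image}\ n$, and $\mathit{init\_s}=(\mathit{Loc}\ c\ \mathit{PTop},\mathit{True})$. The relation $\approx$ between (syntactic configuration, state) pairs is equality. 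*)

theory Defs
  imports Main
begin

type_synonym vname = string

datatype val = Bool bool | Null

datatype expr = Val val | Var vname

datatype stmt = Empty | Assign vname val | Seq stmt stmt | Cond expr stmt stmt | While expr stmt

datatype stmt_path = PTop | PSeqLeft stmt_path stmt | PSeqRight stmt stmt_path
  | PCondLeft expr stmt_path stmt | PCondRight expr stmt stmt_path | PWhile expr stmt_path

datatype location = Loc stmt stmt_path

type_synonym synt_config = "location \<times> bool"

type_synonym state = "vname \<Rightarrow> val option"

type_synonym config = "synt_config \<times> state"

fun eval :: "expr \<Rightarrow> state \<Rightarrow> val" where
  "eval (Val v) s = v"
| "eval (Var x) s = (case s x of Some v \<Rightarrow> v | None \<Rightarrow> Null)"

fun next_loc :: "stmt \<Rightarrow> stmt_path \<Rightarrow> synt_config" where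
  "next_loc c PTop = (Loc c PTop, False)"
| "next_loc c (PSeqLeft sp c2) = (Loc c2 (PSeqRight c sp), True)"
| "next_loc c (PSeqRight c1 sp) = (Loc (Seq c1 c) sp, False)"
| "next_loc c (PCondLeft e sp c2) = (Loc (Cond e c c2) sp, False)"
| "next_loc c (PCondRight e c1 sp) = (Loc (Cond e c1 c) sp, False)"
| "next_loc c (PWhile e sp) = (Loc (While e c) sp, True)"

inductive small_step :: "config \<Rightarrow> config \<Rightarrow> bool" (infix "\<rightarrow>" 50) where
  SEmpty: "((Loc Empty sp, True), s) \<rightarrow> ((Loc Empty sp, False), s)"
| SAssign: "((Loc (Assign x v) sp, True), s) \<rightarrow> ((Loc (Assign x v) sp, False), s(x \<mapsto> v))"
| SSeq: "((Loc (Seq c1 c2) sp, True), s) \<rightarrow> ((Loc c1 (PSeqLeft sp c2), True), s)"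
| SCondT: "eval e s = Bool True \<Longrightarrow>
    ((Loc (Cond e c1 c2) sp, True), s) \<rightarrow> ((Loc c1 (PCondLeft e sp c2), True), s)"
| SCondF: "eval e s = Bool False \<Longrightarrow>
    ((Loc (Cond e c1 c2) sp, True), s) \<rightarrow> ((Loc c2 (PCondRight e c1 sp), True), s)"
| SWhileT: "eval e s = Bool True \<Longrightarrow>
    ((Loc (While e c) sp, True), s) \<rightarrow> ((Loc c (PWhile e sp), True), s)"
| SWhileF: "eval e s = Bool False \<Longrightarrow>
    ((Loc (While e c) sp, True), s) \<rightarrow> ((Loc (While e c) sp, False), s)"
| SNext: "sp \<noteq> PTop \<Longrightarrow> ((Loc c sp, False), s) \<rightarrow> (next_loc c sp, s)"

abbreviation small_steps :: "config \<Rightarrow> config \<Rightarrow> bool" (infix "\<rightarrow>*" 50) where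
  "cf \<rightarrow>* cf' \<equiv> small_step\<^sup>*\<^sup>* cf cf'"

datatype action = NoAct | AssAct vname val

fun action_effect :: "action \<Rightarrow> state \<Rightarrow> state" where
  "action_effect NoAct s = s"
| "action_effect (AssAct x v) s = s(x \<mapsto> v)"

record 'n edge =
  source :: 'n
  action :: action
  dest :: 'n

record 'n ta =
  nodes :: "'n list"
  edges :: "'n edge list"
  init_s :: 'n

definition ta_step :: "'n ta \<Rightarrow> 'n \<times> state \<Rightarrow> 'n \<times> state \<Rightarrow> bool"
  ("_ \<turnstile> _ \<rightarrow>\<^sub>a _" [51, 51, 51] 50) where
  "aut \<turnstile> ls \<rightarrow>\<^sub>a ls' \<longleftrightarrow> (\<exists>e \<in> set (edges aut).
     source e = fst ls \<and> dest e = fst ls' \<and> snd ls' = action_effect (action e) (snd ls))"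

abbreviation ta_steps :: "'n ta \<Rightarrow> 'n \<times> state \<Rightarrow> 'n \<times> state \<Rightarrow> bool"
  ("_ \<turnstile> _ \<rightarrow>\<^sub>a* _" [51, 51, 51] 50) where
  "aut \<turnstile> ls \<rightarrow>\<^sub>a* ls' \<equiv> (ta_step aut)\<^sup>*\<^sup>* ls ls'"

fun all_locations :: "stmt \<Rightarrow> stmt_path \<Rightarrow> location list" where
  "all_locations (Seq c1 c2) sp = Loc (Seq c1 c2) sp #
     all_locations c1 (PSeqLeft sp c2) @ all_locations c2 (PSeqRight c1 sp)"
| "all_locations (Cond e c1 c2) sp = Loc (Cond e c1 c2) sp #
     all_locations c1 (PCondLeft e sp c2) @ all_locations c2 (PCondRight e c1 sp)"
| "all_locations (While e c) sp = Loc (While e c) sp # all_locations c (PWhile e sp)"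
| "all_locations c sp = [Loc c sp]"

definition nodes_of_stmt_locations :: "location list \<Rightarrow> synt_config list" where
  "nodes_of_stmt_locations ls = concat (map (\<lambda>l. [(l, True), (l, False)]) ls)"

fun synt_step_image :: "synt_config \<Rightarrow> synt_config list" where
  "synt_step_image (Loc Empty sp, True) = [(Loc Empty sp, False)]"
| "synt_step_image (Loc (Assign x v) sp, True) = [(Loc (Assign x v) sp, False)]"
| "synt_step_image (Loc (Seq c1 c2) sp, True) = [(Loc c1 (PSeqLeft sp c2), True)]"
| "synt_step_image (Loc (Cond e c1 c2) sp, True) =
     [(Loc c1 (PCondLeft e sp c2), True), (Loc c2 (PCondRight e c1 sp), True)]"
| "synt_step_image (Loc (While e c) sp, True) =
     [(Loc c (PWhile e sp), True), (Loc (While e c) sp, False)]"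
| "synt_step_image (Loc c sp, False) = (if sp = PTop then [] else [next_loc c sp])"

fun action_of_synt_config :: "synt_config \<Rightarrow> action" where
  "action_of_synt_config (Loc (Assign x v) sp, True) = AssAct x v"
| "action_of_synt_config _ = NoAct"

definition stmt_to_ta :: "stmt \<Rightarrow> synt_config ta" where
  "stmt_to_ta c = (let nds = nodes_of_stmt_locations (all_locations c PTop) in
     \<lparr> nodes = nds,
       edges = concat (map (\<lambda>n. map (\<lambda>t. \<lparr>source = n, action = action_of_synt_config n, dest = t\<rparr>)
                                  (synt_step_image n)) nds),
       init_s = (Loc c PTop, True) \<rparr>)"

definition sim_rel :: "config \<Rightarrow> config \<Rightarrow> bool" (infix "\<approx>" 50) where
  "cf \<approx> cfa \<longleftrightarrow> cf = cfa"

end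

theory Submission
  imports Defs
begin

fun up :: "stmt \<Rightarrow> stmt_path \<Rightarrow> location" where
  "up c PTop = Loc c PTop"
| "up c (PSeqLeft sp c2) = Loc (Seq c c2) sp"
| "up c (PSeqRight c1 sp) = Loc (Seq c1 c) sp"
| "up c (PCondLeft e sp c2) = Loc (Cond e c c2) sp"
| "up c (PCondRight e c1 sp) = Loc (Cond e c1 c) sp"
| "up c (PWhile e sp) = Loc (While e c) sp"

lemma self_in: "Loc c sp \<in> set (all_locations c sp)"
  by (cases c) auto

lemma trans_in:
  "Loc c' sp' \<in> set (all_locations c sp) \<Longrightarrow> l \<in> set (all_locations c' sp') \<Longrightarrow>
   l \<in> set (all_locations c sp)"
  by (induction c arbitrary: sp) auto

lemma size_in:
  "Loc c' sp' \<in> set (all_locations c sp) \<Longrightarrow> (sp' = sp \<and> c' = c) \<or> size sp' > size sp"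
  by (induction c arbitrary: sp) (auto, fastforce+)

lemma up_in:
  "Loc c' sp' \<in> set (all_locations c sp) \<Longrightarrow> sp' \<noteq> sp \<Longrightarrow> up c' sp' \<in> set (all_locations c sp)"
proof (induction c arbitrary: sp)
  case (Seq c1 c2)
  show ?case using Seq size_in[of c' sp' c1 "PSeqLeft sp c2"] size_in[of c' sp' c2 "PSeqRight c1 sp"]
    by (cases "sp' = PSeqLeft sp c2"; cases "sp' = PSeqRight c1 sp") auto
next
  case (Cond e c1 c2)
  show ?case using Cond size_in[of c' sp' c1 "PCondLeft e sp c2"] size_in[of c' sp' c2 "PCondRight e c1 sp"]
    by (cases "sp' = PCondLeft e sp c2"; cases "sp' = PCondRight e c1 sp") auto
next
  case (While e c)
  show ?case using While size_in[of c' sp' c "PWhile e sp"]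
    by (cases "sp' = PWhile e sp") auto
qed auto

lemma next_loc_up: "up c sp = Loc c2 sp2 \<Longrightarrow> fst (next_loc c sp) \<in> set (all_locations c2 sp2)"
  by (cases sp) (auto simp: self_in)

lemma step_props:
  assumes "(cf, s) \<rightarrow> (cf', s')"
  shows "cf' \<in> set (synt_step_image cf) \<and> s' = action_effect (action_of_synt_config cf) s
     \<and> (fst cf \<in> set (all_locations r PTop) \<longrightarrow> fst cf' \<in> set (all_locations r PTop))"
  using assms
proof cases
  case (SNext sp c)
  obtain c2 sp2 where u: "up c sp = Loc c2 sp2" by (cases "up c sp")
  have "fst cf \<in> set (all_locations r PTop) \<Longrightarrow> fst cf' \<in> set (all_locations r PTop)"
  proof -
    assume "fst cf \<in> set (all_locations r PTop)"
    then have "Loc c sp \<in> set (all_locations r PTop)" using SNext by simp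
    then have "up c sp \<in> set (all_locations r PTop)" using up_in SNext(4) by blast
    then have "Loc c2 sp2 \<in> set (all_locations r PTop)" using u by simp
    moreover have "fst (next_loc c sp) \<in> set (all_locations c2 sp2)" by (rule next_loc_up[OF u])
    ultimately show ?thesis using trans_in SNext(2) by blast
  qed
  moreover have "cf' \<in> set (synt_step_image cf)" using SNext by (cases c) auto
  moreover have "s' = action_effect (action_of_synt_config cf) s" using SNext by simp
  ultimately show ?thesis by blast
qed (auto intro: trans_in simp: self_in)

lemma nodes_in: "fst n \<in> set ls \<Longrightarrow> n \<in> set (nodes_of_stmt_locations ls)"
  unfolding nodes_of_stmt_locations_def by (cases n; cases "snd n") auto

theorem theorem1:
  fixes c :: stmt and s s' :: state and cf' :: synt_config
  assumes "((Loc c PTop, True), s) \<rightarrow>* (cf', s')"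
  shows "\<exists>cfa' sa'. (stmt_to_ta c \<turnstile> (init_s (stmt_to_ta c), s) \<rightarrow>\<^sub>a* (cfa', sa'))
                   \<and> (cf', s') \<approx> (cfa', sa')"
proof -
  have "stmt_to_ta c \<turnstile> ((Loc c PTop, True), s) \<rightarrow>\<^sub>a* (cf', s')
        \<and> fst cf' \<in> set (all_locations c PTop)"
    using assms
  proof (induction "(cf', s')" arbitrary: cf' s' rule: rtranclp_induct)
    case base
    then show ?case using self_in by auto
  next
    case (step y)
    obtain cf1 s1 where y: "y = (cf1, s1)" by (cases y)
    have IH: "stmt_to_ta c \<turnstile> ((Loc c PTop, True), s) \<rightarrow>\<^sub>a* (cf1, s1)"
       "fst cf1 \<in> set (all_locations c PTop)" using step.hyps(3) y by auto
    have P: "cf' \<in> set (synt_step_image cf1)" "s' = action_effect (action_of_synt_config cf1) s1"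
      "fst cf' \<in> set (all_locations c PTop)"
      using step_props[of cf1 s1 cf' s' c] step.hyps(2) y IH(2) by auto
    have "stmt_to_ta c \<turnstile> (cf1, s1) \<rightarrow>\<^sub>a (cf', s')"
      unfolding ta_step_def stmt_to_ta_def Let_def
      using P nodes_in[OF IH(2)]
      by (auto intro!: bexI[of _ "\<lparr>source = cf1, action = action_of_synt_config cf1, dest = cf'\<rparr>"])
    then show ?case using IH P(3) by (meson rtranclp.rtrancl_into_rtrancl)
  qed
  then show ?thesis unfolding sim_rel_def by (cases cf') (auto simp: stmt_to_ta_def Let_def)
qed

end
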